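(* Let $\mathcal{F}=(W,R)$ be a frame. Then: (1) $\mathcal{F}\models_{\mathsf{PWK}_e^{\Box}}\Box\varphi\to\varphi$ (for all formulas $\varphi$) iff $R$ is reflexive; (2) $\mathcal{F}\models_{\mathsf{PWK}_e^{\Box}}\Box\varphi\to\Box\Box\varphi$ iff $R$ is transitive; (3) $\mathcal{F}\models_{\mathsf{PWK}_e^{\Box}}\Diamond\varphi\to\Box\Diamond\varphi$ iff $R$ is Euclidean.
   Context: Formulas are built from a countably infinite set of propositional variables and the constants $0,1$ using the unary connectives $\neg$, $J_2$, $\Box$ and the binary connective $\vee$; $\varphi\to\psi:=\neg\varphi\vee\psi$ and $\Diamond\varphi:=\neg\Box\neg\varphi$. Let $\mathbf{WK}^e$ be the algebra on $\{0,\tfrac12,1\}$ with $\neg0=1$, $\neg1=0$, $\neg\tfrac12=\tfrac12$; $a\vee b=\tfrac12$ if $a=\tfrac12$ or $b=\tfrac12$, otherwise $a\vee b=\max(a,b)$; $J_2(1)=1$, $J_2(\tfrac12)=J_2(0)=0$. A frame is a pair $(W,R)$ with $W\neq\emptyset$ and $R\subseteq W\times W$. A PWK-Kripke model on $(W,R)$ is $(W,R,v)$ with $v:W\times\mathrm{Fm}\to\{0,\tfrac12,1\}$ such that each $v(w,\cdot)$ commutes with $\neg,\vee,J_2,0,1$ as computed in $\mathbf{WK}^e$, and: $v(w,\Box\varphi)=\tfrac12$ iff $v(w,\varphi)=\tfrac12$; $v(w,\Box\varphi)=1$ iff $v(w,\varphi)\neq\tfrac12$ and $v(s,\varphi)\neq0$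 for all $s$ with $wRs$; $v(w,\Box\varphi)=0$ iff $v(w,\varphi)\neq\tfrac12$ and $v(s,\varphi)=0$ for some $s$ with $wRs$. $\mathcal{F}\models_{\mathsf{PWK}_e^{\Box}}\varphi$ means: for every PWK-Kripke model $(W,R,v)$ on $\mathcal{F}$ and every $w\in W$, $v(w,\varphi)\neq0$. $R$ is Euclidean if $wRs$ and $wRt$ imply $sRt$. *)

theory Defs
  imports Main
begin

datatype fm = Var nat | Zero | One | Neg fm | J2 fm | Box fm | Or fm fm

definition Imp :: "fm \<Rightarrow> fm \<Rightarrow> fm" where
  "Imp \<phi> \<psi> = Or (Neg \<phi>) \<psi>"

definition Dia :: "fm \<Rightarrow> fm" where
  "Dia \<phi> = Neg (Box (Neg \<phi>))"

datatype wk = V0 | Vh | V1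

fun wk_neg :: "wk \<Rightarrow> wk" where
  "wk_neg V0 = V1" | "wk_neg V1 = V0" | "wk_neg Vh = Vh"

fun wk_or :: "wk \<Rightarrow> wk \<Rightarrow> wk" where
  "wk_or Vh b = Vh"
| "wk_or a Vh = Vh"
| "wk_or V1 b = V1"
| "wk_or a V1 = V1"
| "wk_or V0 V0 = V0"

fun wk_J2 :: "wk \<Rightarrow> wk" where
  "wk_J2 V1 = V1" | "wk_J2 Vh = V0" | "wk_J2 V0 = V0"

definition pwk_model :: "'w set \<Rightarrow> ('w \<times> 'w) set \<Rightarrow> ('w \<Rightarrow> fm \<Rightarrow> wk) \<Rightarrow> bool" where
  "pwk_model W R v \<longleftrightarrow>
    (\<forall>w\<in>W.
      v w Zero = V0 \<and> v w One = V1 \<and>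
      (\<forall>\<phi>. v w (Neg \<phi>) = wk_neg (v w \<phi>)) \<and>
      (\<forall>\<phi>. v w (J2 \<phi>) = wk_J2 (v w \<phi>)) \<and>
      (\<forall>\<phi> \<psi>. v w (Or \<phi> \<psi>) = wk_or (v w \<phi>) (v w \<psi>)) \<and>
      (\<forall>\<phi>. v w (Box \<phi>) = Vh \<longleftrightarrow> v w \<phi> = Vh) \<and>
      (\<forall>\<phi>. v w (Box \<phi>) = V1 \<longleftrightarrow> v w \<phi> \<noteq> Vh \<and> (\<forall>s. (w, s) \<in> R \<longrightarrow> v s \<phi> \<noteq> V0)) \<and>
      (\<forall>\<phi>. v w (Box \<phi>) = V0 \<longleftrightarrow> v w \<phi> \<noteq> Vh \<and> (\<exists>s. (w, s) \<in> R \<and> v s \<phi> = V0)))"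

definition frame :: "'w set \<Rightarrow> ('w \<times> 'w) set \<Rightarrow> bool" where
  "frame W R \<longleftrightarrow> W \<noteq> {} \<and> R \<subseteq> W \<times> W"

definition frame_valid :: "'w set \<Rightarrow> ('w \<times> 'w) set \<Rightarrow> fm \<Rightarrow> bool" where
  "frame_valid W R \<phi> \<longleftrightarrow> (\<forall>v. pwk_model W R v \<longrightarrow> (\<forall>w\<in>W. v w \<phi> \<noteq> V0))"

definition euclidean :: "('w \<times> 'w) set \<Rightarrow> bool" where
  "euclidean R \<longleftrightarrow> (\<forall>w s t. (w, s) \<in> R \<longrightarrow> (w, t) \<in> R \<longrightarrow> (s, t) \<in> R)"

end

theory Submission
  imports Defs
begin

primrec ev :: "('w \<Rightarrow> nat \<Rightarrow> wk) \<Rightarrow> ('w \<times> 'w) set \<Rightarrow> fm \<Rightarrow> 'w \<Rightarrow> wk" where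
  "ev f R (Var n) w = f w n"
| "ev f R Zero w = V0"
| "ev f R One w = V1"
| "ev f R (Neg p) w = wk_neg (ev f R p w)"
| "ev f R (J2 p) w = wk_J2 (ev f R p w)"
| "ev f R (Or p q) w = wk_or (ev f R p w) (ev f R q w)"
| "ev f R (Box p) w = (if ev f R p w = Vh then Vh
     else if (\<exists>s. (w, s) \<in> R \<and> ev f R p s = V0) then V0 else V1)"

lemma ev_model: "pwk_model W R (\<lambda>w p. ev f R p w)"
  unfolding pwk_model_def by auto

lemma imp_V0: "wk_or (wk_neg a) b = V0 \<longleftrightarrow> a = V1 \<and> b = V0"
  by (cases a; cases b; simp)

lemma neg_eq: "wk_neg a = V0 \<longleftrightarrow> a = V1" "wk_neg a = V1 \<longleftrightarrow> a = V0"
  by (cases a; simp)+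

lemma modelD:
  assumes "pwk_model W R v" "w \<in> W"
  shows "v w (Neg p) = wk_neg (v w p)"
    "v w (Or p q) = wk_or (v w p) (v w q)"
    "v w (Box p) = Vh \<longleftrightarrow> v w p = Vh"
    "v w (Box p) = V1 \<longleftrightarrow> v w p \<noteq> Vh \<and> (\<forall>s. (w, s) \<in> R \<longrightarrow> v s p \<noteq> V0)"
    "v w (Box p) = V0 \<longleftrightarrow> v w p \<noteq> Vh \<and> (\<exists>s. (w, s) \<in> R \<and> v s p = V0)"
  using assms unfolding pwk_model_def by auto

theorem mainTheorem15:
  fixes W :: "'w set" and R :: "('w \<times> 'w) set"
  assumes "frame W R"
  shows "((\<forall>\<phi>. frame_valid W R (Imp (Box \<phi>) \<phi>)) \<longleftrightarrow> (\<forall>w\<in>W. (w, w) \<in> R))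
       \<and> ((\<forall>\<phi>. frame_valid W R (Imp (Box \<phi>) (Box (Box \<phi>)))) \<longleftrightarrow> trans R)
       \<and> ((\<forall>\<phi>. frame_valid W R (Imp (Dia \<phi>) (Box (Dia \<phi>)))) \<longleftrightarrow> euclidean R)"
proof -
  have RW: "\<And>a b. (a, b) \<in> R \<Longrightarrow> a \<in> W \<and> b \<in> W" using assms unfolding frame_def by auto
  have A: "(\<forall>\<phi>. frame_valid W R (Imp (Box \<phi>) \<phi>)) \<longleftrightarrow> (\<forall>w\<in>W. (w, w) \<in> R)"
  proof
    assume H: "\<forall>\<phi>. frame_valid W R (Imp (Box \<phi>) \<phi>)"
    show "\<forall>w\<in>W. (w, w) \<in> R"
    proof (rule ccontr)
      assume "\<not> (\<forall>w\<in>W. (w, w) \<in> R)"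
      then obtain w where w: "w \<in> W" "(w, w) \<notin> R" by auto
      define f where "f = (\<lambda>x (n::nat). if x = w then V0 else V1)"
      have "frame_valid W R (Imp (Box (Var 0)) (Var 0))" using H by blast
      then have "ev f R (Imp (Box (Var 0)) (Var 0)) w \<noteq> V0"
        using ev_model[of W R f] w unfolding frame_valid_def by blast
      moreover have "ev f R (Imp (Box (Var 0)) (Var 0)) w = V0"
      proof -
        have b1: "ev f R (Box (Var 0)) w = V1" using w by (auto simp: f_def)
        have b2: "ev f R (Var 0) w = V0" by (simp add: f_def)
        show ?thesis by (simp only: Imp_def ev.simps(4,6) b1 b2 imp_V0 wk_neg.simps) simp
      qed
      ultimately show False by simp
    qed
  next
    assume H: "\<forall>w\<in>W. (w, w) \<in> R"
    show "\<forall>\<phi>. frame_valid W R (Imp (Box \<phi>) \<phi>)"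
      unfolding frame_valid_def Imp_def
    proof (intro allI impI ballI)
      fix p v w assume m: "pwk_model W R v" and w: "w \<in> W"
      show "v w (Or (Neg (Box p)) p) \<noteq> V0"
        using modelD[OF m w] H w by (auto simp: imp_V0)
    qed
  qed
  have B: "(\<forall>\<phi>. frame_valid W R (Imp (Box \<phi>) (Box (Box \<phi>)))) \<longleftrightarrow> trans R"
  proof
    assume H: "\<forall>\<phi>. frame_valid W R (Imp (Box \<phi>) (Box (Box \<phi>)))"
    show "trans R"
    proof (rule ccontr)
      assume "\<not> trans R"
      then obtain w s t where r: "(w, s) \<in> R" "(s, t) \<in> R" "(w, t) \<notin> R"
        unfolding trans_def by blast
      have w: "w \<in> W" using RW r by blast
      define f where "f = (\<lambda>x (n::nat). if x = t then V0 else V1)"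
      have "frame_valid W R (Imp (Box (Var 0)) (Box (Box (Var 0))))" using H by blast
      then have "ev f R (Imp (Box (Var 0)) (Box (Box (Var 0)))) w \<noteq> V0"
        using ev_model[of W R f] w unfolding frame_valid_def by blast
      moreover have "ev f R (Imp (Box (Var 0)) (Box (Box (Var 0)))) w = V0"
      proof -
        have st: "s \<noteq> t" using r by blast
        have b1: "ev f R (Box (Var 0)) w = V1" using r(3) by (auto simp: f_def)
        have b2: "ev f R (Box (Var 0)) s = V0" using r(2) st by (auto simp: f_def)
        have ex: "\<exists>x. (w, x) \<in> R \<and> ev f R (Box (Var 0)) x = V0" using r(1) b2 by blast
        have b3: "ev f R (Box (Box (Var 0))) w = V0"
          by (subst ev.simps(7)) (use b1 ex in \<open>simp del: ev.simps\<close>)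
        show ?thesis by (simp only: Imp_def ev.simps(4,6) b1 b3 imp_V0 wk_neg.simps) simp
      qed
      ultimately show False by simp
    qed
  next
    assume H: "trans R"
    show "\<forall>\<phi>. frame_valid W R (Imp (Box \<phi>) (Box (Box \<phi>)))"
      unfolding frame_valid_def Imp_def
    proof (intro allI impI ballI)
      fix p v w assume m: "pwk_model W R v" and w: "w \<in> W"
      show "v w (Or (Neg (Box p)) (Box (Box p))) \<noteq> V0"
      proof
        assume "v w (Or (Neg (Box p)) (Box (Box p))) = V0"
        then have a: "v w (Box p) = V1" "v w (Box (Box p)) = V0"
          using modelD[OF m w] by (auto simp: imp_V0)
        then obtain s where s: "(w, s) \<in> R" "v s (Box p) = V0"
          using modelD(5)[OF m w] by blast
        then obtain t where "(s, t) \<in> R" "v t p = V0"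
          using modelD(5)[OF m] RW by blast
        then show False using a(1) modelD(4)[OF m w] H s unfolding trans_def by blast
      qed
    qed
  qed
  have C: "(\<forall>\<phi>. frame_valid W R (Imp (Dia \<phi>) (Box (Dia \<phi>)))) \<longleftrightarrow> euclidean R"
  proof
    assume H: "\<forall>\<phi>. frame_valid W R (Imp (Dia \<phi>) (Box (Dia \<phi>)))"
    show "euclidean R"
    proof (rule ccontr)
      assume "\<not> euclidean R"
      then obtain w s t where r: "(w, s) \<in> R" "(w, t) \<in> R" "(t, s) \<notin> R"
        unfolding euclidean_def by blast
      have w: "w \<in> W" using RW r by blast
      define f where "f = (\<lambda>x (n::nat). if x = s then V1 else V0)"
      have "frame_valid W R (Imp (Dia (Var 0)) (Box (Dia (Var 0))))" using H by blast
      then have "ev f R (Imp (Dia (Var 0)) (Box (Dia (Var 0)))) w \<noteq> V0"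
        using ev_model[of W R f] w unfolding frame_valid_def by blast
      moreover have "ev f R (Imp (Dia (Var 0)) (Box (Dia (Var 0)))) w = V0"
      proof -
        have n0: "ev f R (Neg (Var 0)) x = V0 \<longleftrightarrow> x = s" for x by (simp add: f_def)
        have nh: "ev f R (Neg (Var 0)) x \<noteq> Vh" for x by (simp add: f_def)
        have b1: "ev f R (Box (Neg (Var 0))) w = V0" using r(1) n0 nh
          by (simp only: ev.simps(7)) auto
        have b2: "ev f R (Box (Neg (Var 0))) t = V1" using r(3) n0 nh
          by (simp only: ev.simps(7)) auto
        have d1: "ev f R (Dia (Var 0)) w = V1" using b1 by (simp add: Dia_def)
        have d2: "ev f R (Dia (Var 0)) t = V0" using b2 by (simp add: Dia_def)
        have ex: "\<exists>x. (w, x) \<in> R \<and> ev f R (Dia (Var 0)) x = V0" using r(2) d2 by blast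
        have b3: "ev f R (Box (Dia (Var 0))) w = V0"
          by (subst ev.simps(7)) (use d1 ex in \<open>simp del: ev.simps\<close>)
        show ?thesis by (simp only: Imp_def ev.simps(4,6) d1 b3 imp_V0 wk_neg.simps) simp
      qed
      ultimately show False by simp
    qed
  next
    assume H: "euclidean R"
    show "\<forall>\<phi>. frame_valid W R (Imp (Dia \<phi>) (Box (Dia \<phi>)))"
      unfolding frame_valid_def Imp_def
    proof (intro allI impI ballI)
      fix p v w assume m: "pwk_model W R v" and w: "w \<in> W"
      show "v w (Or (Neg (Dia p)) (Box (Dia p))) \<noteq> V0"
      proof
        assume "v w (Or (Neg (Dia p)) (Box (Dia p))) = V0"
        then have a: "v w (Dia p) = V1" "v w (Box (Dia p)) = V0"
          using modelD[OF m w] by (auto simp: imp_V0)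
        then have "v w (Box (Neg p)) = V0" using modelD(1)[OF m w] unfolding Dia_def
          by (simp add: neg_eq)
        then obtain s where s: "(w, s) \<in> R" "v s (Neg p) = V0"
          using modelD(5)[OF m w] by blast
        then have ps: "v s p = V1" using modelD(1)[OF m] RW by (auto simp: neg_eq)
        obtain t where t: "(w, t) \<in> R" "v t (Dia p) = V0"
          using a(2) modelD(5)[OF m w] by blast
        have tW: "t \<in> W" using RW t by blast
        have "v t (Box (Neg p)) = V1" using t(2) modelD(1)[OF m tW] unfolding Dia_def
          by (simp add: neg_eq)
        then have "v s (Neg p) \<noteq> V0" using modelD(4)[OF m tW] H s t
          unfolding euclidean_def by blast
        then show False using s by simp
      qed
    qed
  qed
  show ?thesis using A B C by blast
qed

end
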